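(* Let $d\ge1$ and $x,y,u,v\in\mathbb{R}^d_{>0}$, and set $a^\pm:=s^\pm(x,y)$, $b^\pm:=s^\pm(u,v)$. Assume that $\frac{y_i}{x_i}\in\{a^-,a^+\}$ and $\frac{v_i}{u_i}\in\{b^-,b^+\}$ for all $1\le i\le d$. Then there exist $x',y',u',v'\in\mathbb{R}^2_{>0}$ such that \[ s^\pm(x',y')=a^\pm,\qquad s^\pm(u',v')=b^\pm,\qquad F_2(x',y';u',v')\ge F_d(x,y;u,v). \]
   Context: For $x,y\in\mathbb{R}^d_{>0}$ define $s^+(x,y)=\max_i \frac{y_i}{x_i}$ and $s^-(x,y)=\min_i\frac{y_i}{x_i}$. Define $F_d:(\mathbb{R}^d_{>0})^4\to\mathbb{R}_{>0}$ by $F_d(x,y;u,v)=\frac{(x\cdot u)(y\cdot v)}{(x\cdot v)(y\cdot u)}$, where $\cdot$ is the standard Euclidean dot product; $F_2$ is the case $d=2$. *)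

theory Defs
  imports "HOL-Analysis.Analysis"
begin

text \<open>Vectors in R^d are modelled as real^'d for a finite index type 'd (d = CARD('d) >= 1).\<close>

definition pos_vec :: "real^'d \<Rightarrow> bool" where
  "pos_vec x \<longleftrightarrow> (\<forall>i. x $ i > 0)"

definition s_plus :: "real^'d \<Rightarrow> real^'d \<Rightarrow> real" where
  "s_plus x y = Max (range (\<lambda>i. y $ i / x $ i))"

definition s_minus :: "real^'d \<Rightarrow> real^'d \<Rightarrow> real" where
  "s_minus x y = Min (range (\<lambda>i. y $ i / x $ i))"

definition F :: "real^'d \<Rightarrow> real^'d \<Rightarrow> real^'d \<Rightarrow> real^'d \<Rightarrow> real" where
  "F x y u v = ((x \<bullet> u) * (y \<bullet> v)) / ((x \<bullet> v) * (y \<bullet> u))"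

end

theory Submission
  imports Defs
begin

lemma key_ineq:
  fixes a b c d a1 a2 b1 b2 :: real
  assumes "a \<ge> 0" "b \<ge> 0" "c \<ge> 0" "d \<ge> 0" "0 < a1" "a1 \<le> a2" "0 < b1" "b1 \<le> b2"
  shows "(a2*b1+a1*b2)^2*(a+b+c+d)*(a1^2*b1^2*a+a1^2*b2^2*b+a2^2*b1^2*c+a2^2*b2^2*d)
     \<le> (a1*b1+a2*b2)^2*(b1^2*(a+c)+b2^2*(b+d))*(a1^2*(a+b)+a2^2*(c+d))"
proof -
  define E where "E = (a2^2-a1^2)*(b2^2-b1^2)"
  define Q where "Q = (a1*b1*a-a2*b2*d)^2+a1^2*b2^2*b*b+a2^2*b1^2*c*c+a1^2*(b1^2+b2^2)*a*b
     +b1^2*(a1^2+a2^2)*a*c+b2^2*(a1^2+a2^2)*b*d+a2^2*(b1^2+b2^2)*c*d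
     +((a1*b1+a2*b2)^2+a2^2*b1^2+a1^2*b2^2)*b*c"
  have id: "(a1*b1+a2*b2)^2*(b1^2*(a+c)+b2^2*(b+d))*(a1^2*(a+b)+a2^2*(c+d))
     - (a2*b1+a1*b2)^2*(a+b+c+d)*(a1^2*b1^2*a+a1^2*b2^2*b+a2^2*b1^2*c+a2^2*b2^2*d) = E*Q"
    unfolding E_def Q_def by (simp add: algebra_simps power2_eq_square)
  have "a1^2 \<le> a2^2" "b1^2 \<le> b2^2" using assms by (auto intro: power_mono)
  hence "E \<ge> 0" unfolding E_def by simp
  moreover have "Q \<ge> 0" unfolding Q_def using assms by (intro add_nonneg_nonneg mult_nonneg_nonneg) auto
  ultimately have "E*Q \<ge> 0" by simp
  with id show ?thesis by linarith
qed

lemma class_sum: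
  fixes w :: "'d::finite \<Rightarrow> real" and X Y :: "'d \<Rightarrow> bool" and g :: "bool \<Rightarrow> bool \<Rightarrow> real"
  shows "(\<Sum>i\<in>UNIV. w i * g (X i) (Y i)) =
     g False False * (\<Sum>i\<in>UNIV. if \<not> X i \<and> \<not> Y i then w i else 0)
   + g False True * (\<Sum>i\<in>UNIV. if \<not> X i \<and> Y i then w i else 0)
   + g True False * (\<Sum>i\<in>UNIV. if X i \<and> \<not> Y i then w i else 0)
   + g True True * (\<Sum>i\<in>UNIV. if X i \<and> Y i then w i else 0)" (is "?L = ?R")
proof -
  have "\<And>i. w i * g (X i) (Y i) =
     g False False * (if \<not> X i \<and> \<not> Y i then w i else 0)
   + g False True * (if \<not> X i \<and> Y i then w i else 0)
   + g True False * (if X i \<and> \<not> Y i then w i else 0)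
   + g True True * (if X i \<and> Y i then w i else 0)"
    by (cases "X i"; cases "Y i") auto
  hence "(\<Sum>i\<in>UNIV. w i * g (X i) (Y i)) = (\<Sum>i\<in>UNIV. 
     g False False * (if \<not> X i \<and> \<not> Y i then w i else 0)
   + g False True * (if \<not> X i \<and> Y i then w i else 0)
   + g True False * (if X i \<and> \<not> Y i then w i else 0)
   + g True True * (if X i \<and> Y i then w i else 0))" by simp
  also have "\<dots> = ?R" by (simp add: sum.distrib sum_distrib_left)
  finally show ?thesis .
qed

lemma minmax:
  fixes x y :: "real^'d"
  assumes "pos_vec x" "pos_vec y"
  shows "0 < s_minus x y" "s_minus x y \<le> s_plus x y"
    "\<And>i. s_minus x y \<le> y$i/x$i" "\<And>i. y$i/x$i \<le> s_plus x y"
proof -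
  have fin: "finite (range (\<lambda>i. y $ i / x $ i))" by simp
  have ne: "range (\<lambda>i. y $ i / x $ i) \<noteq> {}" by simp
  have "s_minus x y \<in> range (\<lambda>i. y $ i / x $ i)" unfolding s_minus_def using Min_in[OF fin ne] .
  then obtain j where "s_minus x y = y$j/x$j" by auto
  thus "0 < s_minus x y" using assms unfolding pos_vec_def by auto
  show mi: "\<And>i. s_minus x y \<le> y$i/x$i" unfolding s_minus_def using fin by auto
  show ma: "\<And>i. y$i/x$i \<le> s_plus x y" unfolding s_plus_def using fin by auto
  show "s_minus x y \<le> s_plus x y" using mi[of undefined] ma[of undefined] by linarith
qed

lemma s_two:
  fixes x y :: "real^2"
  shows "s_plus x y = max (y$1/x$1) (y$2/x$2)" "s_minus x y = min (y$1/x$1) (y$2/x$2)"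
  unfolding s_plus_def s_minus_def UNIV_2 by auto

theorem mainTheorem7:
  fixes x y u v :: "real^'d"
  assumes "pos_vec x" "pos_vec y" "pos_vec u" "pos_vec v"
    and "\<forall>i. y $ i / x $ i \<in> {s_minus x y, s_plus x y}"
    and "\<forall>i. v $ i / u $ i \<in> {s_minus u v, s_plus u v}"
  shows "\<exists>x' y' u' v' :: real^2.
           pos_vec x' \<and> pos_vec y' \<and> pos_vec u' \<and> pos_vec v' \<and>
           s_plus x' y' = s_plus x y \<and> s_minus x' y' = s_minus x y \<and>
           s_plus u' v' = s_plus u v \<and> s_minus u' v' = s_minus u v \<and>
           F x' y' u' v' \<ge> F x y u v"
proof -
  define al where "al = s_minus x y"
  define Al where "Al = s_plus x y"
  define be where "be = s_minus u v"
  define Be where "Be = s_plus u v"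
  note mx = minmax[OF assms(1,2), folded al_def Al_def]
  note mu = minmax[OF assms(3,4), folded be_def Be_def]
  define X where "X i = (y$i/x$i = Al)" for i
  define Y where "Y i = (v$i/u$i = Be)" for i
  define w where "w i = x$i*u$i" for i
  have xp: "\<And>i. x$i > 0" and yp: "\<And>i. y$i > 0" and up: "\<And>i. u$i > 0" and vp: "\<And>i. v$i > 0"
    using assms(1-4) unfolding pos_vec_def by auto
  have ry: "y$i = x$i * (if X i then Al else al)" for i
  proof -
    have "y$i/x$i = (if X i then Al else al)" using assms(5) unfolding X_def al_def Al_def by auto
    thus ?thesis using xp[of i] by (simp add: field_simps)
  qed
  have tv: "v$i = u$i * (if Y i then Be else be)" for i
  proof -
    have "v$i/u$i = (if Y i then Be else be)" using assms(6) unfolding Y_def be_def Be_def by auto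
    thus ?thesis using up[of i] by (simp add: field_simps)
  qed
  define a where "a = (\<Sum>i\<in>UNIV. if \<not> X i \<and> \<not> Y i then w i else 0)"
  define b where "b = (\<Sum>i\<in>UNIV. if \<not> X i \<and> Y i then w i else 0)"
  define c where "c = (\<Sum>i\<in>UNIV. if X i \<and> \<not> Y i then w i else 0)"
  define d where "d = (\<Sum>i\<in>UNIV. if X i \<and> Y i then w i else 0)"
  have wp: "\<And>i. w i > 0" unfolding w_def using xp up by simp
  have abcd: "a \<ge> 0" "b \<ge> 0" "c \<ge> 0" "d \<ge> 0" unfolding a_def b_def c_def d_def
    using wp by (auto intro!: sum_nonneg simp: less_imp_le)
  have pxu: "x \<bullet> u > 0" unfolding inner_vec_def inner_real_def
    using xp up by (intro sum_pos) auto
  have pxv: "x \<bullet> v > 0" unfolding inner_vec_def inner_real_def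
    using xp vp by (intro sum_pos) auto
  have pyu: "y \<bullet> u > 0" unfolding inner_vec_def inner_real_def
    using yp up by (intro sum_pos) auto
  have pyv: "y \<bullet> v > 0" unfolding inner_vec_def inner_real_def
    using yp vp by (intro sum_pos) auto
  have exu: "x \<bullet> u = a+b+c+d"
  proof -
    have "x \<bullet> u = (\<Sum>i\<in>UNIV. w i)"
      unfolding inner_vec_def inner_real_def w_def by simp
    thus ?thesis using class_sum[where w=w and X=X and Y=Y and g="\<lambda>_ _. 1"] unfolding a_def b_def c_def d_def by simp
  qed
  have exv: "x \<bullet> v = be*(a+c)+Be*(b+d)"
  proof -
    have "x \<bullet> v = (\<Sum>i\<in>UNIV. w i * (\<lambda>p q. if q then Be else be) (X i) (Y i))"
      unfolding inner_vec_def inner_real_def w_def by (subst tv) (simp add: mult.assoc)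
    thus ?thesis using class_sum[where w=w and X=X and Y=Y and g="\<lambda>p q. if q then Be else be"] unfolding a_def b_def c_def d_def by (simp add: algebra_simps)
  qed
  have eyu: "y \<bullet> u = al*(a+b)+Al*(c+d)"
  proof -
    have "y \<bullet> u = (\<Sum>i\<in>UNIV. w i * (\<lambda>p q. if p then Al else al) (X i) (Y i))"
      unfolding inner_vec_def inner_real_def w_def by (subst ry) (simp add: algebra_simps)
    thus ?thesis using class_sum[where w=w and X=X and Y=Y and g="\<lambda>p q. if p then Al else al"] unfolding a_def b_def c_def d_def by (simp add: algebra_simps)
  qed
  have eyv: "y \<bullet> v = al*be*a + al*Be*b + Al*be*c + Al*Be*d"
  proof -
    have "y \<bullet> v = (\<Sum>i\<in>UNIV. w i * (\<lambda>p q. (if p then Al else al) * (if q then Be else be)) (X i) (Y i))"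
      unfolding inner_vec_def inner_real_def w_def by (subst ry, subst tv) (simp add: algebra_simps)
    thus ?thesis using class_sum[where w=w and X=X and Y=Y and g="\<lambda>p q. (if p then Al else al) * (if q then Be else be)"] unfolding a_def b_def c_def d_def by (simp add: algebra_simps)
  qed
  define a1 where "a1 = sqrt al"
  define a2 where "a2 = sqrt Al"
  define b1 where "b1 = sqrt be"
  define b2 where "b2 = sqrt Be"
  have sq: "al = a1^2" "Al = a2^2" "be = b1^2" "Be = b2^2"
    unfolding a1_def a2_def b1_def b2_def using mx mu by auto
  have pos: "0 < a1" "a1 \<le> a2" "0 < b1" "b1 \<le> b2"
    unfolding a1_def a2_def b1_def b2_def using mx mu by auto
  have K: "(a2*b1+a1*b2)^2*(a+b+c+d)*(a1^2*b1^2*a+a1^2*b2^2*b+a2^2*b1^2*c+a2^2*b2^2*d)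
     \<le> (a1*b1+a2*b2)^2*(b1^2*(a+c)+b2^2*(b+d))*(a1^2*(a+b)+a2^2*(c+d))"
    by (rule key_ineq[OF abcd pos])
  have FF: "F x y u v = (a+b+c+d)*(a1^2*b1^2*a+a1^2*b2^2*b+a2^2*b1^2*c+a2^2*b2^2*d)
      / ((b1^2*(a+c)+b2^2*(b+d))*(a1^2*(a+b)+a2^2*(c+d)))"
    unfolding F_def exu exv eyu eyv sq by (simp add: algebra_simps power_mult_distrib)
  have D1: "b1^2*(a+c)+b2^2*(b+d) > 0" using pxv exv sq by simp
  have D2: "a1^2*(a+b)+a2^2*(c+d) > 0" using pyu eyu sq by simp
  have K2: "(a2*b1+a1*b2)^2 > 0" proof - have "a2*b1+a1*b2 > 0" using pos by (intro add_pos_pos mult_pos_pos) auto thus ?thesis by simp qed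
  have Fle: "F x y u v \<le> (a1*b1+a2*b2)^2 / (a2*b1+a1*b2)^2"
    unfolding FF using K D1 D2 K2 by (simp add: divide_simps mult_ac)
  define p where "p = a2*b2"
  define q where "q = a1*b1"
  have pq: "p > 0" "q > 0" unfolding p_def q_def using pos by auto
  define x' :: "real^2" where "x' = vector [1,1]"
  define y' :: "real^2" where "y' = vector [al,Al]"
  define u' :: "real^2" where "u' = vector [p,q]"
  define v' :: "real^2" where "v' = vector [be*p,Be*q]"
  have F2: "F x' y' u' v' = (a1*b1+a2*b2)^2 / (a2*b1+a1*b2)^2"
  proof -
    have "F x' y' u' v' = (p+q)*(al*be*p+Al*Be*q)/((be*p+Be*q)*(al*p+Al*q))"
      unfolding F_def inner_vec_def inner_real_def sum_2 x'_def y'_def u'_def v'_def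
      by (simp add: algebra_simps)
    also have "\<dots> = (a1*b1+a2*b2)^2 / (a2*b1+a1*b2)^2"
    proof -
      define M where "M = a1*a2*b1*b2"
      have M: "M > 0" unfolding M_def using pos by simp
      have n: "(p+q)*(al*be*p+Al*Be*q) = M*(a1*b1+a2*b2)^2"
        unfolding M_def sq p_def q_def by (simp add: algebra_simps power2_eq_square)
      have dd: "(be*p+Be*q)*(al*p+Al*q) = M*(a2*b1+a1*b2)^2"
        unfolding M_def sq p_def q_def by (simp add: algebra_simps power2_eq_square)
      show ?thesis unfolding n dd using M by simp
    qed
    finally show ?thesis .
  qed
  show ?thesis
  proof (intro exI conjI)
    show "pos_vec x'" "pos_vec y'" "pos_vec u'" "pos_vec v'"
      unfolding pos_vec_def forall_2 x'_def y'_def u'_def v'_def using mx mu pq by auto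
    show "s_plus x' y' = s_plus x y" "s_minus x' y' = s_minus x y"
      unfolding s_two x'_def y'_def al_def[symmetric] Al_def[symmetric] using mx by auto
    show "s_plus u' v' = s_plus u v" "s_minus u' v' = s_minus u v"
      unfolding s_two u'_def v'_def be_def[symmetric] Be_def[symmetric] using mu pq by auto
    show "F x' y' u' v' \<ge> F x y u v" using F2 Fle by simp
  qed
qed

end
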